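(* Let $K$ be a compact line, let $T:K\to\mathbb{R}$ be a nondecreasing right-continuous function, and let $h:K\to\mathbb{R}$ be $T$-integrable. Define $H(x)=\int_{0_K}^x h\,dT$ for $x\in K$. If $f:K\to\mathbb{R}$ is bounded, then $f$ is $H$-integrable if and only if $fh$ is $T$-integrable, and in this case $\int_K f\,dH=\int_K fh\,dT$.
   Context: A compact line is a compact space $K$ whose topology is the order topology of a linear order on $K$; $0_K$ and $1_K$ denote its minimum and maximum, and $0_K<1_K$. A tagged partition of $K$ is a finite family $P=\{([x_{i-1},x_i],t_i):i=1,\dots,n\}$ with $0_K=x_0\le\cdots\le x_n=1_K$ and $t_i\in[x_{i-1},x_i]$. A gauge assigns to each $x\in K$ an open interval $\delta(x)\ni x$; $P$ is $\delta$-fine if $[x_{i-1},x_i]\subset\delta(t_i)$ for all $i$. With $S(f,G,P)=f(0_K)G(0_K)+\sum_{i=1}^n f(t_i)(G(x_i)-G(x_{i-1}))$, $f$ is $G$-integrable if there is $A\in\mathbb{R}$ such that for every $\varepsilon>0$ some gauge $\delta$ gives $|S(f,G,P)-A|<\varepsilon$ for all $\delta$-fine $P$; $\int_K f\,dG=A$. For $x\in K$, $\int_{0_K}^x h\,dT$ denotes the integral, in this sense, of $h|_{[0_K,x]}$ with respect to $T|_{[0_K,x]}$ on the compact line $[0_K,x]$ (which exists whenever $h$ is $T$-integrable on $K$). *)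

theory Defs
  imports "HOL-Analysis.Analysis"
begin

text \<open>A compact line K is modelled as the universe of a type 'a of class
linorder_topology (topology = order topology) such that UNIV is compact and
UNIV = {a..b} with a < b.  Integrals over a subinterval [a,x] are defined
intrinsically on the compact line [a,x] (whose order topology coincides with
the subspace topology).\<close>

definition open_interval_in :: "'a::linorder \<Rightarrow> 'a \<Rightarrow> 'a set \<Rightarrow> bool" where
  "open_interval_in a b S \<longleftrightarrow>
     (\<exists>l u. l \<in> {a..b} \<and> u \<in> {a..b} \<and> S = {l<..<u})
   \<or> (\<exists>u. u \<in> {a..b} \<and> S = {a..<u})
   \<or> (\<exists>l. l \<in> {a..b} \<and> S = {l<..b})
   \<or> S = {a..b}"

definition gauge_on :: "'a::linorder \<Rightarrow> 'a \<Rightarrow> ('a \<Rightarrow> 'a set) \<Rightarrow> bool" where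
  "gauge_on a b \<delta> \<longleftrightarrow> (\<forall>t\<in>{a..b}. open_interval_in a b (\<delta> t) \<and> t \<in> \<delta> t)"

text \<open>Tagged partition {([xs (i-1), xs i], ts i) : i = 1..n} of [a,b].\<close>
definition tagged_partition :: "'a::linorder \<Rightarrow> 'a \<Rightarrow> nat \<Rightarrow> (nat \<Rightarrow> 'a) \<Rightarrow> (nat \<Rightarrow> 'a) \<Rightarrow> bool" where
  "tagged_partition a b n xs ts \<longleftrightarrow>
     xs 0 = a \<and> xs n = b \<and>
     (\<forall>i\<in>{1..n}. xs (i - 1) \<le> xs i \<and> xs (i - 1) \<le> ts i \<and> ts i \<le> xs i)"

definition delta_fine :: "('a::linorder \<Rightarrow> 'a set) \<Rightarrow> nat \<Rightarrow> (nat \<Rightarrow> 'a) \<Rightarrow> (nat \<Rightarrow> 'a) \<Rightarrow> bool" where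
  "delta_fine \<delta> n xs ts \<longleftrightarrow> (\<forall>i\<in>{1..n}. {xs (i - 1)..xs i} \<subseteq> \<delta> (ts i))"

definition RS_sum :: "'a \<Rightarrow> ('a \<Rightarrow> real) \<Rightarrow> ('a \<Rightarrow> real) \<Rightarrow> nat \<Rightarrow> (nat \<Rightarrow> 'a) \<Rightarrow> (nat \<Rightarrow> 'a) \<Rightarrow> real" where
  "RS_sum a f G n xs ts = f a * G a + (\<Sum>i=1..n. f (ts i) * (G (xs i) - G (xs (i - 1))))"

definition has_RS_integral :: "'a::linorder \<Rightarrow> 'a \<Rightarrow> ('a \<Rightarrow> real) \<Rightarrow> ('a \<Rightarrow> real) \<Rightarrow> real \<Rightarrow> bool" where
  "has_RS_integral a b f G A \<longleftrightarrow>
     (\<forall>\<epsilon>>0. \<exists>\<delta>. gauge_on a b \<delta> \<and>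
        (\<forall>n xs ts. tagged_partition a b n xs ts \<and> delta_fine \<delta> n xs ts \<longrightarrow>
            \<bar>RS_sum a f G n xs ts - A\<bar> < \<epsilon>))"

definition RS_integrable :: "'a::linorder \<Rightarrow> 'a \<Rightarrow> ('a \<Rightarrow> real) \<Rightarrow> ('a \<Rightarrow> real) \<Rightarrow> bool" where
  "RS_integrable a b f G \<longleftrightarrow> (\<exists>A. has_RS_integral a b f G A)"

definition RS_integral :: "'a::linorder \<Rightarrow> 'a \<Rightarrow> ('a \<Rightarrow> real) \<Rightarrow> ('a \<Rightarrow> real) \<Rightarrow> real" where
  "RS_integral a b f G = (THE A. has_RS_integral a b f G A)"

end

theory Submission
  imports Defs
begin

definition nb :: "'a::linorder \<Rightarrow> 'a \<Rightarrow> 'a \<Rightarrow> 'a set \<Rightarrow> bool" where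
  "nb c d t S \<longleftrightarrow> (\<exists>l u. (l < t \<or> t = c) \<and> (t < u \<or> t = d) \<and>
     {x. c \<le> x \<and> x \<le> d \<and> (l < x \<or> t = c) \<and> (x < u \<or> t = d)} \<subseteq> S)"

definition ngauge :: "'a::linorder \<Rightarrow> 'a \<Rightarrow> ('a \<Rightarrow> 'a set) \<Rightarrow> bool" where
  "ngauge c d \<delta> \<longleftrightarrow> (\<forall>t. c \<le> t \<and> t \<le> d \<longrightarrow> nb c d t (\<delta> t))"

definition psum :: "('a \<Rightarrow> real) \<Rightarrow> ('a \<Rightarrow> real) \<Rightarrow> nat \<Rightarrow> (nat \<Rightarrow> 'a) \<Rightarrow> (nat \<Rightarrow> 'a) \<Rightarrow> real" where
  "psum f G n xs ts = (\<Sum>i=1..n. f (ts i) * (G (xs i) - G (xs (i - 1))))"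

definition hasI :: "'a::linorder \<Rightarrow> 'a \<Rightarrow> ('a \<Rightarrow> real) \<Rightarrow> ('a \<Rightarrow> real) \<Rightarrow> real \<Rightarrow> bool" where
  "hasI c d f G A \<longleftrightarrow>
     (\<forall>\<epsilon>>0. \<exists>\<delta>. ngauge c d \<delta> \<and>
        (\<forall>n xs ts. tagged_partition c d n xs ts \<and> delta_fine \<delta> n xs ts \<longrightarrow>
            \<bar>f c * G c + psum f G n xs ts - A\<bar> < \<epsilon>))"

lemma RS_sum_psum: "RS_sum a f G n xs ts = f a * G a + psum f G n xs ts"
  by (simp add: RS_sum_def psum_def)

lemma nb_int: "nb c d t S1 \<Longrightarrow> nb c d t S2 \<Longrightarrow> nb c d t (S1 \<inter> S2)"
  unfolding nb_def
proof (elim exE conjE)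
  fix l1 u1 l2 u2
  assume h: "l1 < t \<or> t = c" "t < u1 \<or> t = d"
    "{x. c \<le> x \<and> x \<le> d \<and> (l1 < x \<or> t = c) \<and> (x < u1 \<or> t = d)} \<subseteq> S1"
    "l2 < t \<or> t = c" "t < u2 \<or> t = d"
    "{x. c \<le> x \<and> x \<le> d \<and> (l2 < x \<or> t = c) \<and> (x < u2 \<or> t = d)} \<subseteq> S2"
  show "\<exists>l u. (l < t \<or> t = c) \<and> (t < u \<or> t = d) \<and>
     {x. c \<le> x \<and> x \<le> d \<and> (l < x \<or> t = c) \<and> (x < u \<or> t = d)} \<subseteq> S1 \<inter> S2"
    apply (rule exI[of _ "max l1 l2"], rule exI[of _ "min u1 u2"])
    using h by auto
qed

lemma nb_restrict: "nb c d t S \<Longrightarrow> c \<le> c' \<Longrightarrow> c' \<le> t \<Longrightarrow> t \<le> d' \<Longrightarrow> d' \<le> d \<Longrightarrow> nb c' d' t S"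
  unfolding nb_def
proof (elim exE conjE)
  fix l u
  assume h: "l < t \<or> t = c" "t < u \<or> t = d"
    "{x. c \<le> x \<and> x \<le> d \<and> (l < x \<or> t = c) \<and> (x < u \<or> t = d)} \<subseteq> S"
    and o: "c \<le> c'" "c' \<le> t" "t \<le> d'" "d' \<le> d"
  show "\<exists>l u. (l < t \<or> t = c') \<and> (t < u \<or> t = d') \<and>
     {x. c' \<le> x \<and> x \<le> d' \<and> (l < x \<or> t = c') \<and> (x < u \<or> t = d')} \<subseteq> S"
  proof (intro exI conjI)
    show "l < t \<or> t = c'" using h(1) o by auto
    show "t < u \<or> t = d'" using h(2) o by auto
    show "{x. c' \<le> x \<and> x \<le> d' \<and> (l < x \<or> t = c') \<and> (x < u \<or> t = d')} \<subseteq> S"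
    proof
      fix x assume x: "x \<in> {x. c' \<le> x \<and> x \<le> d' \<and> (l < x \<or> t = c') \<and> (x < u \<or> t = d')}"
      have 1: "l < x \<or> t = c"
      proof (cases "l < x")
        case False
        then have "t = c'" using x by auto
        then show ?thesis using h(1) x False by auto
      qed simp
      have 2: "x < u \<or> t = d"
      proof (cases "x < u")
        case False
        then have "t = d'" using x by auto
        then show ?thesis using h(2) x False by auto
      qed simp
      show "x \<in> S" using h(3) 1 2 x o by auto
    qed
  qed
qed

lemma ngauge_int: "ngauge c d \<delta>1 \<Longrightarrow> ngauge c d \<delta>2 \<Longrightarrow> ngauge c d (\<lambda>t. \<delta>1 t \<inter> \<delta>2 t)"
  unfolding ngauge_def using nb_int by blast

lemma ngauge_restrict: "ngauge c d \<delta> \<Longrightarrow> c \<le> c' \<Longrightarrow> d' \<le> d \<Longrightarrow> ngauge c' d' \<delta>"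
  unfolding ngauge_def using nb_restrict by (metis order_trans)

lemma oi_nb: "open_interval_in c d G \<Longrightarrow> t \<in> G \<Longrightarrow> c \<le> t \<Longrightarrow> t \<le> d \<Longrightarrow> nb c d t G"
  unfolding open_interval_in_def nb_def
  apply (elim disjE exE conjE)
  subgoal for l u apply (rule exI[of _ l], rule exI[of _ u]) by auto
  subgoal for u apply (rule exI[of _ c], rule exI[of _ u]) by auto
  subgoal for l apply (rule exI[of _ l], rule exI[of _ d]) by auto
  subgoal apply (rule exI[of _ c], rule exI[of _ d]) by auto
  done

lemma nb_oi: assumes "nb c d t S" "c \<le> t" "t \<le> d"
  shows "\<exists>G. open_interval_in c d G \<and> t \<in> G \<and> G \<subseteq> S"
proof -
  obtain l u where h: "l < t \<or> t = c" "t < u \<or> t = d"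
    "{x. c \<le> x \<and> x \<le> d \<and> (l < x \<or> t = c) \<and> (x < u \<or> t = d)} \<subseteq> S"
    using assms(1) unfolding nb_def by blast
  have oi2: "open_interval_in c d {c..<v}" if "v \<in> {c..d}" for v
    unfolding open_interval_in_def using that by blast
  have oi3: "open_interval_in c d {v<..d}" if "v \<in> {c..d}" for v
    unfolding open_interval_in_def using that by blast
  have oi1: "open_interval_in c d {v<..<w}" if "v \<in> {c..d}" "w \<in> {c..d}" for v w
    unfolding open_interval_in_def using that by blast
  have oi4: "open_interval_in c d {c..d}"
    unfolding open_interval_in_def by blast
  show ?thesis
  proof (cases "t = c")
    case tc: True
    show ?thesis
    proof (cases "t = d")
      case True
      then show ?thesis using tc h assms oi4
        by (intro exI[of _ "{c..d}"]) auto
    next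
      case False
      have "min u d \<in> {c..d}" using tc h assms False by (auto simp: min_def)
      then show ?thesis using tc h assms False oi2[of "min u d"]
        by (intro exI[of _ "{c..<min u d}"]) (auto simp: subset_eq less_imp_le)
    qed
  next
    case tc: False
    show ?thesis
    proof (cases "t = d")
      case True
      have "max l c \<in> {c..d}" using tc h assms True by (auto simp: max_def)
      then show ?thesis using tc h assms True oi3[of "max l c"]
        by (intro exI[of _ "{max l c<..d}"]) (auto simp: subset_eq less_imp_le)
    next
      case False
      have "max l c \<in> {c..d}" using tc h assms by (auto simp: max_def)
      moreover have "min u d \<in> {c..d}" using tc h assms False by (auto simp: min_def)
      ultimately show ?thesis using tc h assms False oi1[of "max l c" "min u d"]
        by (intro exI[of _ "{max l c<..<min u d}"]) (auto simp: subset_eq less_imp_le)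
    qed
  qed
qed

lemma part_mono: "tagged_partition c d n xs ts \<Longrightarrow> j \<le> k \<Longrightarrow> k \<le> n \<Longrightarrow> xs j \<le> xs k"
proof (induction k)
  case 0 then show ?case by simp
next
  case (Suc k)
  then show ?case
  proof (cases "j = Suc k")
    case False
    then have "xs j \<le> xs k" using Suc by auto
    moreover have "xs k \<le> xs (Suc k)" using Suc.prems unfolding tagged_partition_def
      by (metis atLeastAtMost_iff diff_Suc_1 le_add1 plus_1_eq_Suc)
    ultimately show ?thesis by simp
  qed simp
qed

lemma part_range: "tagged_partition c d n xs ts \<Longrightarrow> i \<le> n \<Longrightarrow> c \<le> xs i \<and> xs i \<le> d"
  using part_mono[of c d n xs ts 0 i] part_mono[of c d n xs ts i n]
  unfolding tagged_partition_def by auto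

lemma part_tag: "tagged_partition c d n xs ts \<Longrightarrow> i \<in> {1..n} \<Longrightarrow> c \<le> ts i \<and> ts i \<le> d"
  using part_range[of c d n xs ts i] part_range[of c d n xs ts "i-1"]
  unfolding tagged_partition_def by (meson atLeastAtMost_iff diff_le_self order_trans)

lemma has_iff: assumes "c \<le> d" shows "has_RS_integral c d f G A \<longleftrightarrow> hasI c d f G A"
proof
  assume H: "has_RS_integral c d f G A"
  show "hasI c d f G A" unfolding hasI_def
  proof (intro allI impI)
    fix e :: real assume "e > 0"
    then obtain \<delta> where g: "gauge_on c d \<delta>" and P: "\<forall>n xs ts. tagged_partition c d n xs ts \<and> delta_fine \<delta> n xs ts \<longrightarrow>
            \<bar>RS_sum c f G n xs ts - A\<bar> < e" using H unfolding has_RS_integral_def by blast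
    have "ngauge c d \<delta>" using g oi_nb unfolding gauge_on_def ngauge_def by (meson atLeastAtMost_iff)
    then show "\<exists>\<delta>. ngauge c d \<delta> \<and>
        (\<forall>n xs ts. tagged_partition c d n xs ts \<and> delta_fine \<delta> n xs ts \<longrightarrow>
            \<bar>f c * G c + psum f G n xs ts - A\<bar> < e)" using P by (auto simp: RS_sum_psum)
  qed
next
  assume H: "hasI c d f G A"
  show "has_RS_integral c d f G A" unfolding has_RS_integral_def
  proof (intro allI impI)
    fix e :: real assume "e > 0"
    then obtain \<delta> where g: "ngauge c d \<delta>" and P: "\<forall>n xs ts. tagged_partition c d n xs ts \<and> delta_fine \<delta> n xs ts \<longrightarrow>
            \<bar>f c * G c + psum f G n xs ts - A\<bar> < e" using H unfolding hasI_def by blast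
    define \<delta>' where "\<delta>' t = (SOME S. open_interval_in c d S \<and> t \<in> S \<and> S \<subseteq> \<delta> t)" for t
    have d': "open_interval_in c d (\<delta>' t) \<and> t \<in> \<delta>' t \<and> \<delta>' t \<subseteq> \<delta> t" if "c \<le> t" "t \<le> d" for t
      unfolding \<delta>'_def by (rule someI_ex) (use nb_oi g that ngauge_def in blast)
    have "gauge_on c d \<delta>'" using d' unfolding gauge_on_def by auto
    moreover have "delta_fine \<delta> n xs ts" if "tagged_partition c d n xs ts" "delta_fine \<delta>' n xs ts" for n xs ts
      using that d' part_tag unfolding delta_fine_def by blast
    ultimately show "\<exists>\<delta>. gauge_on c d \<delta> \<and>
        (\<forall>n xs ts. tagged_partition c d n xs ts \<and> delta_fine \<delta> n xs ts \<longrightarrow>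
            \<bar>RS_sum c f G n xs ts - A\<bar> < e)" using P by (metis RS_sum_psum)
  qed
qed

lemma part_concat:
  assumes P: "tagged_partition c y n xs ts" and Q: "tagged_partition y z m ys ss"
  defines "xs' \<equiv> \<lambda>i. if i \<le> n then xs i else ys (i - n)"
    and "ts' \<equiv> \<lambda>i. if i \<le> n then ts i else ss (i - n)"
  shows "tagged_partition c z (n+m) xs' ts'"
    and "psum f G (n+m) xs' ts' = psum f G n xs ts + psum f G m ys ss"
    and "delta_fine \<delta> n xs ts \<Longrightarrow> delta_fine \<delta> m ys ss \<Longrightarrow> delta_fine \<delta> (n+m) xs' ts'"
proof -
  have y0: "ys 0 = y" and xn: "xs n = y" and ym: "ys m = z" and x0: "xs 0 = c"
    using P Q unfolding tagged_partition_def by auto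
  have key: "xs' (i - 1) = ys (i - n - 1)" if "n < i" for i
  proof (cases "i - 1 = n")
    case True then show ?thesis using xn y0 unfolding xs'_def by auto
  next
    case False then show ?thesis using that unfolding xs'_def by auto
  qed
  have lo: "xs' i = xs i" "ts' i = ts i" "xs' (i - 1) = xs (i - 1)" if "i \<le> n" for i
    using that unfolding xs'_def ts'_def by auto
  have hi: "xs' i = ys (i - n)" "ts' i = ss (i - n)" if "n < i" for i
    using that unfolding xs'_def ts'_def by auto
  have idx: "i - n \<in> {1..m}" if "i \<in> {1..n+m}" "\<not> i \<le> n" for i using that by auto
  have A: "xs' 0 = c" using x0 unfolding xs'_def by simp
  have B: "xs' (n + m) = z"
    using ym xn y0 unfolding xs'_def by (cases "m = 0") auto
  have C: "\<forall>i\<in>{1..n+m}. xs' (i - 1) \<le> xs' i \<and> xs' (i - 1) \<le> ts' i \<and> ts' i \<le> xs' i"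
  proof
    fix i assume i: "i \<in> {1..n+m}"
    show "xs' (i - 1) \<le> xs' i \<and> xs' (i - 1) \<le> ts' i \<and> ts' i \<le> xs' i"
    proof (cases "i \<le> n")
      case True
      then show ?thesis using P i lo unfolding tagged_partition_def by auto
    next
      case False
      then have "n < i" by simp
      have e: "xs' (i-1) = ys (i-n-1)" "xs' i = ys (i-n)" "ts' i = ss (i-n)"
        using key hi \<open>n < i\<close> by auto
      show ?thesis using Q idx[OF i False] unfolding tagged_partition_def e by blast
    qed
  qed
  show "tagged_partition c z (n+m) xs' ts'"
    unfolding tagged_partition_def using A B C by blast
  have "psum f G (n+m) xs' ts' = (\<Sum>i=1..n. f (ts' i) * (G (xs' i) - G (xs' (i - 1))))
       + (\<Sum>i=n+1..n+m. f (ts' i) * (G (xs' i) - G (xs' (i - 1))))"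
    unfolding psum_def by (rule sum.ub_add_nat) simp
  also have "(\<Sum>i=1..n. f (ts' i) * (G (xs' i) - G (xs' (i - 1)))) = psum f G n xs ts"
    unfolding psum_def by (rule sum.cong) (auto simp: lo)
  also have "(\<Sum>i=n+1..n+m. f (ts' i) * (G (xs' i) - G (xs' (i - 1))))
     = (\<Sum>i=1..m. f (ts' (i+n)) * (G (xs' (i+n)) - G (xs' (i + n - 1))))"
    using sum.shift_bounds_cl_nat_ivl[of "\<lambda>i. f (ts' i) * (G (xs' i) - G (xs' (i - 1)))" 1 n m]
    by (simp add: add.commute)
  also have "\<dots> = psum f G m ys ss"
    unfolding psum_def
  proof (rule sum.cong)
    fix i assume "i \<in> {1..m}"
    then have "n < i + n" by auto
    then show "f (ts' (i+n)) * (G (xs' (i+n)) - G (xs' (i + n - 1))) = f (ss i) * (G (ys i) - G (ys (i - 1)))"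
      using hi[of "i+n"] key[of "i+n"] by simp
  qed simp
  finally show "psum f G (n+m) xs' ts' = psum f G n xs ts + psum f G m ys ss" .
  assume F1: "delta_fine \<delta> n xs ts" and F2: "delta_fine \<delta> m ys ss"
  show "delta_fine \<delta> (n+m) xs' ts'"
    unfolding delta_fine_def
  proof
    fix i assume i: "i \<in> {1..n+m}"
    show "{xs' (i - 1)..xs' i} \<subseteq> \<delta> (ts' i)"
    proof (cases "i \<le> n")
      case True
      then show ?thesis using F1 i lo unfolding delta_fine_def by auto
    next
      case False
      then have "n < i" by simp
      have e: "xs' (i-1) = ys (i-n-1)" "xs' i = ys (i-n)" "ts' i = ss (i-n)"
        using key hi \<open>n < i\<close> by auto
      show ?thesis using F2 idx[OF i False] unfolding delta_fine_def e by blast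
    qed
  qed
qed

lemma part_concat_ex:
  assumes "tagged_partition c y n xs ts" "tagged_partition y z m ys ss"
  shows "\<exists>xs' ts'. tagged_partition c z (n+m) xs' ts' \<and>
     psum f G (n+m) xs' ts' = psum f G n xs ts + psum f G m ys ss \<and>
     (delta_fine \<delta> n xs ts \<longrightarrow> delta_fine \<delta> m ys ss \<longrightarrow> delta_fine \<delta> (n+m) xs' ts')"
  using part_concat[OF assms] by blast

lemma part_triv: "tagged_partition c c 0 (\<lambda>_. c) ts" "delta_fine \<delta> 0 xs ts" "psum f G 0 xs ts = 0"
  unfolding tagged_partition_def delta_fine_def psum_def by auto

lemma part_single:
  assumes "y \<le> t" "t \<le> z"
  shows "tagged_partition y z 1 (\<lambda>i. if i = 0 then y else z) (\<lambda>_. t)"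
    and "{y..z} \<subseteq> \<delta> t \<Longrightarrow> delta_fine \<delta> 1 (\<lambda>i. if i = 0 then y else z) (\<lambda>_. t)"
    and "psum f G 1 (\<lambda>i. if i = 0 then y else z) (\<lambda>_. t) = f t * (G z - G y)"
  using assms unfolding tagged_partition_def delta_fine_def psum_def by auto

lemma part_extend:
  assumes "tagged_partition c y n xs ts" "delta_fine \<delta> n xs ts" "y \<le> t" "t \<le> z" "{y..z} \<subseteq> \<delta> t"
  shows "\<exists>xs' ts'. tagged_partition c z (n+1) xs' ts' \<and> delta_fine \<delta> (n+1) xs' ts' \<and>
     psum f G (n+1) xs' ts' = psum f G n xs ts + f t * (G z - G y)"
  using part_concat_ex[OF assms(1) part_single(1)[OF assms(3,4)], of f G \<delta>]
    part_single(2,3)[OF assms(3,4)] assms(2,5) by metis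

lemma cousin:
  fixes c d :: "'a::linorder_topology"
  assumes comp: "compact (UNIV::'a set)" and dense: "\<forall>x y::'a. x < y \<longrightarrow> (\<exists>z. x < z \<and> z < y)"
    and cd: "c \<le> d" and g: "ngauge c d \<delta>"
  shows "\<exists>n xs ts. tagged_partition c d n xs ts \<and> delta_fine \<delta> n xs ts"
proof -
  define S where "S = {y. c \<le> y \<and> y \<le> d \<and> (\<exists>n xs ts. tagged_partition c y n xs ts \<and> delta_fine \<delta> n xs ts)}"
  have cS: "c \<in> S" unfolding S_def using cd part_triv by blast
  have "compact (UNIV \<inter> closure S)" by (rule compact_Int_closed[OF comp closed_closure])
  then have cc: "compact (closure S)" by simp
  have ne: "closure S \<noteq> {}" using cS closure_subset by blast
  obtain s where sc: "s \<in> closure S" and smax: "\<forall>t\<in>closure S. t \<le> s"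
    using compact_attains_sup[OF cc ne] by blast
  have "S \<subseteq> {c..d}" unfolding S_def by auto
  then have "closure S \<subseteq> {c..d}" by (rule closure_minimal) simp
  then have sd: "c \<le> s" "s \<le> d" using sc by auto
  obtain l u where lu: "l < s \<or> s = c" "s < u \<or> s = d"
    "{x. c \<le> x \<and> x \<le> d \<and> (l < x \<or> s = c) \<and> (x < u \<or> s = d)} \<subseteq> \<delta> s"
    using g sd unfolding ngauge_def nb_def by blast
  have sS: "s \<in> S"
  proof (cases "s = c")
    case True then show ?thesis using cS by simp
  next
    case False
    then have ls: "l < s" using lu by auto
    have "S \<inter> {l<..} \<noteq> {}"
      using sc[unfolded closure_iff_nhds_not_empty, rule_format, of "{l<..}" "{l<..}"] ls by simp
    then obtain y where yS: "y \<in> S" and ly: "l < y" by auto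
    have ys: "y \<le> s" using yS smax closure_subset by auto
    obtain n xs ts where P: "tagged_partition c y n xs ts" "delta_fine \<delta> n xs ts"
      using yS unfolding S_def by blast
    have "{y..s} \<subseteq> \<delta> s"
    proof
      fix x assume "x \<in> {y..s}"
      then have x: "y \<le> x" "x \<le> s" by auto
      have "c \<le> y" using yS unfolding S_def by auto
      then have 1: "c \<le> x" "x \<le> d" using x sd by auto
      have 2: "l < x" using ly x(1) by (rule less_le_trans)
      have 3: "x < u \<or> s = d" using lu(2) x(2) by (auto intro: le_less_trans)
      show "x \<in> \<delta> s" using 1 2 3 lu(3) by blast
    qed
    then obtain xs' ts' where "tagged_partition c s (n+1) xs' ts'" "delta_fine \<delta> (n+1) xs' ts'"
      using part_extend[OF P ys order_refl] by blast
    then show ?thesis unfolding S_def using sd by blast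
  qed
  have "s = d"
  proof (rule ccontr)
    assume "s \<noteq> d"
    then have sd': "s < d" "s < u" using sd lu by auto
    obtain y where y: "s < y" "y \<le> d" "\<forall>x. x \<le> y \<longrightarrow> x < u"
    proof (cases "u \<le> d")
      case True
      then obtain z where "s < z" "z < u" using dense sd' by blast
      have "\<forall>x. x \<le> z \<longrightarrow> x < u" using \<open>z < u\<close> by (auto intro: le_less_trans)
      moreover have "z \<le> d" using \<open>z < u\<close> True by simp
      ultimately show ?thesis using that[of z] \<open>s < z\<close> by blast
    next
      case False
      then have "\<forall>x. x \<le> d \<longrightarrow> x < u" by (auto intro: le_less_trans)
      then show ?thesis using that[of d] sd' by blast
    qed
    obtain n xs ts where P: "tagged_partition c s n xs ts" "delta_fine \<delta> n xs ts"
      using sS unfolding S_def by blast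
    have "{s..y} \<subseteq> \<delta> s"
    proof
      fix x assume x: "x \<in> {s..y}"
      have 1: "l < x \<or> s = c" using lu(1) x by (auto intro: less_le_trans)
      have 2: "c \<le> x" "x \<le> d" "x < u" using x y sd by auto
      show "x \<in> \<delta> s" using 1 2 lu(3) by blast
    qed
    then obtain xs' ts' where "tagged_partition c y (n+1) xs' ts'" "delta_fine \<delta> (n+1) xs' ts'"
      using part_extend[OF P order_refl less_imp_le[OF y(1)]] by blast
    then have "y \<in> S" unfolding S_def using y sd by auto
    then have "y \<le> s" using smax closure_subset by blast
    then show False using y(1) by simp
  qed
  then show ?thesis using sS unfolding S_def by blast
qed

lemma fine_int: "delta_fine (\<lambda>t. \<delta>1 t \<inter> \<delta>2 t) n xs ts \<longleftrightarrow> delta_fine \<delta>1 n xs ts \<and> delta_fine \<delta>2 n xs ts"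
  by (auto simp: delta_fine_def)

lemma fine_mono: "delta_fine \<delta>1 n xs ts \<Longrightarrow> (\<And>t. \<delta>1 t \<subseteq> \<delta>2 t) \<Longrightarrow> delta_fine \<delta>2 n xs ts"
  unfolding delta_fine_def by blast

lemma hasI_unique:
  fixes c d :: "'a::linorder_topology"
  assumes comp: "compact (UNIV::'a set)" and dense: "\<forall>x y::'a. x < y \<longrightarrow> (\<exists>z. x < z \<and> z < y)"
    and cd: "c \<le> d" and HA: "hasI c d f G A" and HB: "hasI c d f G B"
  shows "A = B"
proof (rule ccontr)
  assume "A \<noteq> B"
  then have e: "\<bar>A - B\<bar> / 2 > 0" by simp
  obtain \<delta>1 where g1: "ngauge c d \<delta>1" and P1: "\<forall>n xs ts. tagged_partition c d n xs ts \<and> delta_fine \<delta>1 n xs ts \<longrightarrow>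
            \<bar>f c * G c + psum f G n xs ts - A\<bar> < \<bar>A - B\<bar> / 2"
    using HA e unfolding hasI_def by blast
  obtain \<delta>2 where g2: "ngauge c d \<delta>2" and P2: "\<forall>n xs ts. tagged_partition c d n xs ts \<and> delta_fine \<delta>2 n xs ts \<longrightarrow>
            \<bar>f c * G c + psum f G n xs ts - B\<bar> < \<bar>A - B\<bar> / 2"
    using HB e unfolding hasI_def by blast
  obtain n xs ts where P: "tagged_partition c d n xs ts" "delta_fine (\<lambda>t. \<delta>1 t \<inter> \<delta>2 t) n xs ts"
    using cousin[OF comp dense cd ngauge_int[OF g1 g2]] by blast
  have "\<bar>f c * G c + psum f G n xs ts - A\<bar> < \<bar>A - B\<bar> / 2"
       "\<bar>f c * G c + psum f G n xs ts - B\<bar> < \<bar>A - B\<bar> / 2"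
    using P P1 P2 fine_int by blast+
  then show False by (auto simp: abs_if split: if_splits)
qed

lemma cauchy_crit:
  fixes c d :: "'a::linorder_topology"
  assumes comp: "compact (UNIV::'a set)" and dense: "\<forall>x y::'a. x < y \<longrightarrow> (\<exists>z. x < z \<and> z < y)"
    and cd: "c \<le> d"
    and C: "\<forall>e>0. \<exists>\<delta>. ngauge c d \<delta> \<and> (\<forall>n xs ts m ys ss. tagged_partition c d n xs ts \<and> delta_fine \<delta> n xs ts
          \<and> tagged_partition c d m ys ss \<and> delta_fine \<delta> m ys ss \<longrightarrow> \<bar>psum f G n xs ts - psum f G m ys ss\<bar> < e)"
  shows "\<exists>A. hasI c d f G A"
proof -
  have "\<forall>k::nat. \<exists>\<delta>. ngauge c d \<delta> \<and> (\<forall>n xs ts m ys ss. tagged_partition c d n xs ts \<and> delta_fine \<delta> n xs ts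
          \<and> tagged_partition c d m ys ss \<and> delta_fine \<delta> m ys ss \<longrightarrow> \<bar>psum f G n xs ts - psum f G m ys ss\<bar> < inverse (real (Suc k)))"
    using C by simp
  from choice[OF this] obtain D where D: "\<forall>k. ngauge c d (D k) \<and> (\<forall>n xs ts m ys ss. tagged_partition c d n xs ts \<and> delta_fine (D k) n xs ts
          \<and> tagged_partition c d m ys ss \<and> delta_fine (D k) m ys ss \<longrightarrow> \<bar>psum f G n xs ts - psum f G m ys ss\<bar> < inverse (real (Suc k)))"
    by blast
  define E where "E k t = (\<Inter>j\<in>{..k}. D j t)" for k t
  have Eg: "ngauge c d (E k)" for k
  proof (induction k)
    case 0
    have "E 0 = D 0" unfolding E_def by auto
    then show ?case using D by simp
  next
    case (Suc k)
    have "E (Suc k) = (\<lambda>t. E k t \<inter> D (Suc k) t)" unfolding E_def by (auto simp: atMost_Suc)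
    then show ?case using ngauge_int[OF Suc.IH] D by simp
  qed
  have Esub: "E k t \<subseteq> D j t" if "j \<le> k" for j k t using that unfolding E_def by auto
  have "\<forall>k. \<exists>v. \<exists>n xs ts. tagged_partition c d n xs ts \<and> delta_fine (E k) n xs ts \<and> v = psum f G n xs ts"
    using cousin[OF comp dense cd Eg] by blast
  from choice[OF this] obtain s where s: "\<forall>k. \<exists>n xs ts. tagged_partition c d n xs ts \<and> delta_fine (E k) n xs ts \<and> s k = psum f G n xs ts"
    by blast
  have sk: "\<bar>psum f G n xs ts - s k\<bar> < inverse (real (Suc k))"
    if "tagged_partition c d n xs ts" "delta_fine (D k) n xs ts" for k n xs ts
  proof -
    obtain m ys ss where "tagged_partition c d m ys ss" "delta_fine (E k) m ys ss" "s k = psum f G m ys ss"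
      using s by blast
    moreover then have "delta_fine (D k) m ys ss" using fine_mono Esub[of k k] by blast
    ultimately show ?thesis using D that by auto
  qed
  have sjk: "\<bar>s j - s k\<bar> < inverse (real (Suc k))" if "k \<le> j" for j k
  proof -
    obtain m ys ss where "tagged_partition c d m ys ss" "delta_fine (E j) m ys ss" "s j = psum f G m ys ss"
      using s by blast
    moreover then have "delta_fine (D k) m ys ss" using fine_mono Esub[OF that] by blast
    ultimately show ?thesis using sk by auto
  qed
  have "Cauchy s"
  proof (rule CauchyI)
    fix e :: real assume "0 < e"
    then obtain k where k: "inverse (real (Suc k)) < e / 2" using reals_Archimedean[of "e/2"] by auto
    have "norm (s m - s n) < e" if "m \<ge> k" "n \<ge> k" for m n
      using sjk[OF that(1)] sjk[OF that(2)] k by simp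
    then show "\<exists>M. \<forall>m\<ge>M. \<forall>n\<ge>M. norm (s m - s n) < e" by blast
  qed
  then obtain L where L: "s \<longlonglongrightarrow> L" unfolding Cauchy_convergent_iff convergent_def by blast
  have sL: "\<bar>L - s k\<bar> \<le> inverse (real (Suc k))" for k
  proof -
    have "(\<lambda>j. \<bar>s j - s k\<bar>) \<longlonglongrightarrow> \<bar>L - s k\<bar>"
      by (intro tendsto_intros L)
    moreover have "\<forall>j\<ge>k. \<bar>s j - s k\<bar> \<le> inverse (real (Suc k))" using sjk less_imp_le by blast
    ultimately show ?thesis by (rule Lim_bounded)
  qed
  have "hasI c d f G (f c * G c + L)"
    unfolding hasI_def
  proof (intro allI impI)
    fix e :: real assume "0 < e"
    then obtain k where k: "inverse (real (Suc k)) < e / 2" using reals_Archimedean[of "e/2"] by auto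
    have "\<bar>f c * G c + psum f G n xs ts - (f c * G c + L)\<bar> < e"
      if "tagged_partition c d n xs ts" "delta_fine (D k) n xs ts" for n xs ts
      using sk[OF that] sL[of k] k by linarith
    then show "\<exists>\<delta>. ngauge c d \<delta> \<and> (\<forall>n xs ts. tagged_partition c d n xs ts \<and> delta_fine \<delta> n xs ts \<longrightarrow>
            \<bar>f c * G c + psum f G n xs ts - (f c * G c + L)\<bar> < e)"
      using D by blast
  qed
  then show ?thesis by blast
qed

lemma hasI_restrict:
  fixes c d :: "'a::linorder_topology"
  assumes comp: "compact (UNIV::'a set)" and dense: "\<forall>x y::'a. x < y \<longrightarrow> (\<exists>z. x < z \<and> z < y)"
    and H: "hasI c d f G A" and x: "c \<le> x" "x \<le> d"
  shows "\<exists>B. hasI c x f G B"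
proof (rule cauchy_crit[OF comp dense x(1)], intro allI impI)
  fix e :: real assume "0 < e"
  then obtain \<delta> where g: "ngauge c d \<delta>" and P: "\<forall>n xs ts. tagged_partition c d n xs ts \<and> delta_fine \<delta> n xs ts \<longrightarrow>
            \<bar>f c * G c + psum f G n xs ts - A\<bar> < e / 2"
    using H unfolding hasI_def by (meson half_gt_zero)
  obtain k ys ss where R: "tagged_partition x d k ys ss" "delta_fine \<delta> k ys ss"
    using cousin[OF comp dense x(2) ngauge_restrict[OF g x(1) order_refl]] by blast
  have bound: "\<bar>f c * G c + psum f G n xs ts + psum f G k ys ss - A\<bar> < e / 2"
    if T: "tagged_partition c x n xs ts" "delta_fine \<delta> n xs ts" for n xs ts
  proof -
    obtain xs' ts' where "tagged_partition c d (n+k) xs' ts'"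
      "psum f G (n+k) xs' ts' = psum f G n xs ts + psum f G k ys ss"
      "delta_fine \<delta> (n+k) xs' ts'"
      using part_concat_ex[OF T(1) R(1), of f G \<delta>] T(2) R(2) by blast
    then show ?thesis using P by (metis add.assoc)
  qed
  have "\<bar>psum f G n xs ts - psum f G m ys' ss'\<bar> < e"
    if "tagged_partition c x n xs ts" "delta_fine \<delta> n xs ts"
       "tagged_partition c x m ys' ss'" "delta_fine \<delta> m ys' ss'" for n xs ts m ys' ss'
    using bound[OF that(1,2)] bound[OF that(3,4)] by linarith
  then show "\<exists>\<delta>. ngauge c x \<delta> \<and> (\<forall>n xs ts m ys ss. tagged_partition c x n xs ts \<and> delta_fine \<delta> n xs ts
          \<and> tagged_partition c x m ys ss \<and> delta_fine \<delta> m ys ss \<longrightarrow> \<bar>psum f G n xs ts - psum f G m ys ss\<bar> < e)"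
    using ngauge_restrict[OF g order_refl x(2)] by blast
qed

lemma RS_integral_eq:
  fixes c d :: "'a::linorder_topology"
  assumes comp: "compact (UNIV::'a set)" and dense: "\<forall>x y::'a. x < y \<longrightarrow> (\<exists>z. x < z \<and> z < y)"
    and cd: "c \<le> d" and H: "hasI c d f G A"
  shows "RS_integral c d f G = A"
  unfolding RS_integral_def
proof (rule the_equality)
  show "has_RS_integral c d f G A" using has_iff[OF cd] H by simp
  fix B assume "has_RS_integral c d f G B"
  then have "hasI c d f G B" using has_iff[OF cd] by simp
  then show "B = A" using hasI_unique[OF comp dense cd H] by simp
qed

lemma RS_integrable_iff: "c \<le> d \<Longrightarrow> RS_integrable c d f G \<longleftrightarrow> (\<exists>A. hasI c d f G A)"
  unfolding RS_integrable_def using has_iff by blast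

lemma I_has:
  fixes a b :: "'a::linorder_topology"
  assumes comp: "compact (UNIV::'a set)" and dense: "\<forall>x y::'a. x < y \<longrightarrow> (\<exists>z. x < z \<and> z < y)"
    and H: "hasI a b h T A0" and x: "a \<le> x" "x \<le> b"
  shows "hasI a x h T (RS_integral a x h T)"
proof -
  obtain B where B: "hasI a x h T B" using hasI_restrict[OF comp dense H x] by blast
  then show ?thesis using RS_integral_eq[OF comp dense x(1) B] by simp
qed

lemma hasI_point: "hasI a a h T (h a * T a)"
  unfolding hasI_def
proof (intro allI impI)
  fix e :: real assume "0 < e"
  have g: "ngauge a a (\<lambda>_. UNIV)" unfolding ngauge_def nb_def by auto
  have "\<forall>n xs ts. tagged_partition a a n xs ts \<and> delta_fine (\<lambda>_. UNIV) n xs ts \<longrightarrow>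
       \<bar>h a * T a + psum h T n xs ts - h a * T a\<bar> < e"
  proof (intro allI impI)
    fix n xs ts assume "tagged_partition a a n xs ts \<and> delta_fine (\<lambda>_. UNIV) n xs ts"
    then have "xs i = a" if "i \<le> n" for i using part_range[of a a n xs ts i] that by auto
    then have "psum h T n xs ts = 0" unfolding psum_def by (intro sum.neutral) auto
    then show "\<bar>h a * T a + psum h T n xs ts - h a * T a\<bar> < e" using \<open>0 < e\<close> by simp
  qed
  then show "\<exists>\<delta>. ngauge a a \<delta> \<and> (\<forall>n xs ts. tagged_partition a a n xs ts \<and> delta_fine \<delta> n xs ts \<longrightarrow>
       \<bar>h a * T a + psum h T n xs ts - h a * T a\<bar> < e)" using g by blast
qed

lemma telescope1: "(\<Sum>i=1..(n::nat). F i - F (i - 1)) = F n - (F 0 :: real)"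
  by (induction n) (auto simp: sum.cl_ivl_Suc)

lemma piece:
  fixes a b :: "'a::linorder_topology"
  assumes comp: "compact (UNIV::'a set)" and dense: "\<forall>x y::'a. x < y \<longrightarrow> (\<exists>z. x < z \<and> z < y)"
    and HI: "\<forall>x. a \<le> x \<and> x \<le> b \<longrightarrow> hasI a x h T (I x)"
    and g: "ngauge a b \<delta>" and uv: "a \<le> u" "u \<le> v" "v \<le> b" and eta: "\<eta> > 0"
  shows "\<exists>m ys ss. tagged_partition u v m ys ss \<and> delta_fine \<delta> m ys ss \<and>
      \<bar>psum h T m ys ss - (I v - I u)\<bar> < \<eta>"
proof -
  have Hu: "hasI a u h T (I u)" and Hv: "hasI a v h T (I v)" using HI uv by auto
  obtain \<delta>u where gu: "ngauge a u \<delta>u" and Pu: "\<forall>n xs ts. tagged_partition a u n xs ts \<and> delta_fine \<delta>u n xs ts \<longrightarrow>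
            \<bar>h a * T a + psum h T n xs ts - I u\<bar> < \<eta>/2"
    using Hu eta unfolding hasI_def by (meson half_gt_zero)
  obtain \<delta>v where gv: "ngauge a v \<delta>v" and Pv: "\<forall>n xs ts. tagged_partition a v n xs ts \<and> delta_fine \<delta>v n xs ts \<longrightarrow>
            \<bar>h a * T a + psum h T n xs ts - I v\<bar> < \<eta>/2"
    using Hv eta unfolding hasI_def by (meson half_gt_zero)
  have "ngauge a u (\<lambda>t. (\<delta> t \<inter> \<delta>u t) \<inter> \<delta>v t)"
    by (intro ngauge_int gu ngauge_restrict[OF g] ngauge_restrict[OF gv]) (use uv in auto)
  then obtain n xs ts where Q: "tagged_partition a u n xs ts" "delta_fine (\<lambda>t. (\<delta> t \<inter> \<delta>u t) \<inter> \<delta>v t) n xs ts"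
    using cousin[OF comp dense uv(1)] by blast
  have "ngauge u v (\<lambda>t. \<delta> t \<inter> \<delta>v t)"
    by (intro ngauge_int ngauge_restrict[OF g] ngauge_restrict[OF gv]) (use uv in auto)
  then obtain m ys ss where R: "tagged_partition u v m ys ss" "delta_fine (\<lambda>t. \<delta> t \<inter> \<delta>v t) m ys ss"
    using cousin[OF comp dense uv(2)] by blast
  have Qf: "delta_fine \<delta>u n xs ts" "delta_fine \<delta>v n xs ts" using Q(2) fine_int by blast+
  have Rf: "delta_fine \<delta> m ys ss" "delta_fine \<delta>v m ys ss" using R(2) fine_int by blast+
  obtain xs' ts' where "tagged_partition a v (n+m) xs' ts'"
      "psum h T (n+m) xs' ts' = psum h T n xs ts + psum h T m ys ss"
      "delta_fine \<delta>v (n+m) xs' ts'"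
    using part_concat_ex[OF Q(1) R(1), of h T \<delta>v] Qf(2) Rf(2) by blast
  then have 1: "\<bar>h a * T a + (psum h T n xs ts + psum h T m ys ss) - I v\<bar> < \<eta>/2" using Pv by metis
  have 2: "\<bar>h a * T a + psum h T n xs ts - I u\<bar> < \<eta>/2" using Pu Q(1) Qf(1) by blast
  have "\<bar>psum h T m ys ss - (I v - I u)\<bar> < \<eta>" using 1 2 by linarith
  then show ?thesis using R(1) Rf(1) by blast
qed

lemma saks_henstock_J:
  fixes a b :: "'a::linorder_topology"
  assumes comp: "compact (UNIV::'a set)" and dense: "\<forall>x y::'a. x < y \<longrightarrow> (\<exists>z. x < z \<and> z < y)"
    and HI: "\<forall>x. a \<le> x \<and> x \<le> b \<longrightarrow> hasI a x h T (I x)"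
    and Ia: "I a = h a * T a"
    and g: "ngauge a b \<delta>"
    and Pd: "\<forall>n xs ts. tagged_partition a b n xs ts \<and> delta_fine \<delta> n xs ts \<longrightarrow>
            \<bar>h a * T a + psum h T n xs ts - I b\<bar> < \<epsilon>"
    and P: "tagged_partition a b n xs ts" "delta_fine \<delta> n xs ts"
    and J: "J \<subseteq> {1..n}"
  shows "\<bar>\<Sum>i\<in>J. h (ts i) * (T (xs i) - T (xs (i - 1))) - (I (xs i) - I (xs (i - 1)))\<bar> \<le> \<epsilon>"
proof -
  define g' where "g' i = h (ts i) * (T (xs i) - T (xs (i - 1)))" for i
  define q where "q i = I (xs i) - I (xs (i - 1))" for i
  have rng: "a \<le> xs i \<and> xs i \<le> b" if "i \<le> n" for i using part_range[OF P(1) that] .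
  have step: "xs (i - 1) \<le> ts i \<and> ts i \<le> xs i \<and> xs (i - 1) \<le> xs i" if "i \<in> {1..n}" for i
    using P(1) that unfolding tagged_partition_def by auto
  have fin: "{xs (i - 1)..xs i} \<subseteq> \<delta> (ts i)" if "i \<in> {1..n}" for i
    using P(2) that unfolding delta_fine_def by auto
  have main: "\<bar>\<Sum>i\<in>J. g' i - q i\<bar> \<le> \<epsilon> + \<eta>" if eta: "\<eta> > 0" for \<eta>
  proof -
    define \<eta>' where "\<eta>' = \<eta> / (real n + 1)"
    have eta': "\<eta>' > 0" "real n * \<eta>' < \<eta>" using eta unfolding \<eta>'_def by (auto simp: field_simps)
    have ind: "\<exists>m ys ss. tagged_partition a (xs k) m ys ss \<and> delta_fine \<delta> m ys ss \<and>
       \<bar>psum h T m ys ss - (\<Sum>i=1..k. if i \<in> J then g' i else q i)\<bar> \<le> real k * \<eta>'" if "k \<le> n" for k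
      using that
    proof (induction k)
      case 0
      have "xs 0 = a" using P(1) unfolding tagged_partition_def by simp
      have "tagged_partition a (xs 0) 0 (\<lambda>_. a) (\<lambda>_. a)" using \<open>xs 0 = a\<close> unfolding tagged_partition_def by simp
      moreover have "delta_fine \<delta> 0 (\<lambda>_. a) (\<lambda>_. a)" by (simp add: delta_fine_def)
      moreover have "psum h T 0 (\<lambda>_. a) (\<lambda>_. a) = 0" by (simp add: psum_def)
      ultimately show ?case by (intro exI[of _ 0] exI[of _ "\<lambda>_. a"]) simp
    next
      case (Suc k)
      then obtain m ys ss where IH: "tagged_partition a (xs k) m ys ss" "delta_fine \<delta> m ys ss"
        "\<bar>psum h T m ys ss - (\<Sum>i=1..k. if i \<in> J then g' i else q i)\<bar> \<le> real k * \<eta>'" by auto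
      have sk: "Suc k \<in> {1..n}" using Suc.prems by auto
      have sum_eq: "(\<Sum>i=1..Suc k. if i \<in> J then g' i else q i) =
          (\<Sum>i=1..k. if i \<in> J then g' i else q i) + (if Suc k \<in> J then g' (Suc k) else q (Suc k))"
        by (simp add: sum.cl_ivl_Suc)
      show ?case
      proof (cases "Suc k \<in> J")
        case True
        obtain xs' ts' where N: "tagged_partition a (xs (Suc k)) (m+1) xs' ts'" "delta_fine \<delta> (m+1) xs' ts'"
          "psum h T (m+1) xs' ts' = psum h T m ys ss + h (ts (Suc k)) * (T (xs (Suc k)) - T (xs k))"
          using part_extend[OF IH(1,2), of "ts (Suc k)" "xs (Suc k)" h T] step[OF sk] fin[OF sk] by auto
        have "\<bar>psum h T (m+1) xs' ts' - (\<Sum>i=1..Suc k. if i \<in> J then g' i else q i)\<bar> \<le> real (Suc k) * \<eta>'"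
          using IH(3) N(3) sum_eq True eta' unfolding g'_def by (simp add: algebra_simps)
        then show ?thesis using N(1,2) by blast
      next
        case False
        have "a \<le> xs k" "xs k \<le> xs (Suc k)" "xs (Suc k) \<le> b" using rng[of k] rng[of "Suc k"] step[OF sk] Suc.prems by auto
        then obtain m2 ys2 ss2 where R: "tagged_partition (xs k) (xs (Suc k)) m2 ys2 ss2" "delta_fine \<delta> m2 ys2 ss2"
          "\<bar>psum h T m2 ys2 ss2 - (I (xs (Suc k)) - I (xs k))\<bar> < \<eta>'"
          using piece[OF comp dense HI g _ _ _ eta'(1)] by blast
        obtain xs' ts' where N: "tagged_partition a (xs (Suc k)) (m+m2) xs' ts'"
          "psum h T (m+m2) xs' ts' = psum h T m ys ss + psum h T m2 ys2 ss2" "delta_fine \<delta> (m+m2) xs' ts'"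
          using part_concat_ex[OF IH(1) R(1), of h T \<delta>] IH(2) R(2) by blast
        have "\<bar>psum h T (m+m2) xs' ts' - (\<Sum>i=1..Suc k. if i \<in> J then g' i else q i)\<bar> \<le> real (Suc k) * \<eta>'"
          using IH(3) N(2) sum_eq False R(3) unfolding q_def by (simp add: algebra_simps)
        then show ?thesis using N(1,3) by blast
      qed
    qed
    obtain m ys ss where M: "tagged_partition a (xs n) m ys ss" "delta_fine \<delta> m ys ss"
       "\<bar>psum h T m ys ss - (\<Sum>i=1..n. if i \<in> J then g' i else q i)\<bar> \<le> real n * \<eta>'"
      using ind[of n] by auto
    have xn: "xs n = b" and x0: "xs 0 = a" using P(1) unfolding tagged_partition_def by auto
    have 1: "\<bar>h a * T a + psum h T m ys ss - I b\<bar> < \<epsilon>" using Pd M(1,2) xn by auto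
    have tel: "(\<Sum>i=1..n. q i) = I b - I a" unfolding q_def using telescope1[of "\<lambda>i. I (xs i)" n] xn x0 by simp
    have "(\<Sum>i=1..n. if i \<in> J then g' i else q i) - (\<Sum>i=1..n. q i) = (\<Sum>i=1..n. if i \<in> J then g' i - q i else 0)"
      unfolding sum_subtractf[symmetric] by (rule sum.cong) auto
    also have "\<dots> = (\<Sum>i\<in>J. g' i - q i)"
      using sum.inter_restrict[of "{1..n}" "\<lambda>i. g' i - q i" J] J by (simp add: Int_absorb1)
    finally have "(\<Sum>i\<in>J. g' i - q i) = (\<Sum>i=1..n. if i \<in> J then g' i else q i) - (I b - I a)" using tel by simp
    then show ?thesis using 1 M(3) eta' Ia by linarith
  qed
  have "\<bar>\<Sum>i\<in>J. g' i - q i\<bar> \<le> \<epsilon>"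
    by (rule field_le_epsilon) (rule main)
  then show ?thesis unfolding g'_def q_def .
qed

lemma saks_henstock_abs:
  fixes a b :: "'a::linorder_topology"
  assumes comp: "compact (UNIV::'a set)" and dense: "\<forall>x y::'a. x < y \<longrightarrow> (\<exists>z. x < z \<and> z < y)"
    and HI: "\<forall>x. a \<le> x \<and> x \<le> b \<longrightarrow> hasI a x h T (I x)"
    and Ia: "I a = h a * T a"
    and g: "ngauge a b \<delta>"
    and Pd: "\<forall>n xs ts. tagged_partition a b n xs ts \<and> delta_fine \<delta> n xs ts \<longrightarrow>
            \<bar>h a * T a + psum h T n xs ts - I b\<bar> < \<epsilon>"
    and P: "tagged_partition a b n xs ts" "delta_fine \<delta> n xs ts"
  shows "(\<Sum>i=1..n. \<bar>h (ts i) * (T (xs i) - T (xs (i - 1))) - (I (xs i) - I (xs (i - 1)))\<bar>) \<le> 2 * \<epsilon>"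
proof -
  define x where "x i = h (ts i) * (T (xs i) - T (xs (i - 1))) - (I (xs i) - I (xs (i - 1)))" for i
  have SH: "\<bar>\<Sum>i\<in>J. x i\<bar> \<le> \<epsilon>" if "J \<subseteq> {1..n}" for J
    using saks_henstock_J[OF comp dense HI Ia g Pd P that] unfolding x_def .
  have "(\<Sum>i=1..n. \<bar>x i\<bar>) = (\<Sum>i=1..n. if 0 \<le> x i then x i else - x i)"
    by (rule sum.cong) auto
  also have "\<dots> = sum x ({1..n} \<inter> {i. 0 \<le> x i}) + sum (\<lambda>i. - x i) ({1..n} \<inter> - {i. 0 \<le> x i})"
    by (rule sum.If_cases) simp
  also have "\<dots> \<le> \<epsilon> + \<epsilon>"
  proof (rule add_mono)
    show "sum x ({1..n} \<inter> {i. 0 \<le> x i}) \<le> \<epsilon>" using SH[of "{1..n} \<inter> {i. 0 \<le> x i}"] by auto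
    show "sum (\<lambda>i. - x i) ({1..n} \<inter> - {i. 0 \<le> x i}) \<le> \<epsilon>"
      using SH[of "{1..n} \<inter> - {i. 0 \<le> x i}"] by (auto simp: sum_negf)
  qed
  finally show ?thesis unfolding x_def by simp
qed

lemma transfer:
  fixes c d :: "'a::linorder"
  assumes close: "\<forall>e>0. \<exists>\<delta>. ngauge c d \<delta> \<and> (\<forall>n xs ts. tagged_partition c d n xs ts \<and> delta_fine \<delta> n xs ts \<longrightarrow>
        \<bar>(F1 c * G1 c + psum F1 G1 n xs ts) - (F2 c * G2 c + psum F2 G2 n xs ts)\<bar> < e)"
    and H: "hasI c d F1 G1 A"
  shows "hasI c d F2 G2 A"
  unfolding hasI_def
proof (intro allI impI)
  fix e :: real assume e: "0 < e"
  obtain \<delta>1 where g1: "ngauge c d \<delta>1" and P1: "\<forall>n xs ts. tagged_partition c d n xs ts \<and> delta_fine \<delta>1 n xs ts \<longrightarrow>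
            \<bar>F1 c * G1 c + psum F1 G1 n xs ts - A\<bar> < e/2"
    using H e unfolding hasI_def by (meson half_gt_zero)
  obtain \<delta>2 where g2: "ngauge c d \<delta>2" and P2: "\<forall>n xs ts. tagged_partition c d n xs ts \<and> delta_fine \<delta>2 n xs ts \<longrightarrow>
        \<bar>(F1 c * G1 c + psum F1 G1 n xs ts) - (F2 c * G2 c + psum F2 G2 n xs ts)\<bar> < e/2"
    using close e by (meson half_gt_zero)
  have "\<bar>F2 c * G2 c + psum F2 G2 n xs ts - A\<bar> < e"
    if "tagged_partition c d n xs ts" "delta_fine (\<lambda>t. \<delta>1 t \<inter> \<delta>2 t) n xs ts" for n xs ts
  proof -
    have "\<bar>F1 c * G1 c + psum F1 G1 n xs ts - A\<bar> < e/2"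
      "\<bar>(F1 c * G1 c + psum F1 G1 n xs ts) - (F2 c * G2 c + psum F2 G2 n xs ts)\<bar> < e/2"
      using P1 P2 that fine_int by blast+
    then show ?thesis by (auto simp: abs_if split: if_splits)
  qed
  then show "\<exists>\<delta>. ngauge c d \<delta> \<and> (\<forall>n xs ts. tagged_partition c d n xs ts \<and> delta_fine \<delta> n xs ts \<longrightarrow>
            \<bar>F2 c * G2 c + psum F2 G2 n xs ts - A\<bar> < e)"
    using ngauge_int[OF g1 g2] by blast
qed

lemma closeness:
  fixes a b :: "'a::linorder_topology"
  assumes comp: "compact (UNIV::'a set)" and dense: "\<forall>x y::'a. x < y \<longrightarrow> (\<exists>z. x < z \<and> z < y)"
    and HI: "\<forall>x. a \<le> x \<and> x \<le> b \<longrightarrow> hasI a x h T (I x)"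
    and ab: "a \<le> b"
    and Ia: "I a = h a * T a"
    and M: "M > 0" "\<forall>x. \<bar>f x\<bar> \<le> M"
  shows "\<forall>e>0. \<exists>\<delta>. ngauge a b \<delta> \<and> (\<forall>n xs ts. tagged_partition a b n xs ts \<and> delta_fine \<delta> n xs ts \<longrightarrow>
        \<bar>(f a * I a + psum f I n xs ts) - ((\<lambda>x. f x * h x) a * T a + psum (\<lambda>x. f x * h x) T n xs ts)\<bar> < e)"
proof (intro allI impI)
  fix e :: real assume e: "0 < e"
  define \<epsilon> where "\<epsilon> = e / (4 * M)"
  have eps: "\<epsilon> > 0" "M * (2 * \<epsilon>) < e" using e M unfolding \<epsilon>_def by (auto simp: field_simps)
  obtain \<delta> where g: "ngauge a b \<delta>" and Pd: "\<forall>n xs ts. tagged_partition a b n xs ts \<and> delta_fine \<delta> n xs ts \<longrightarrow>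
            \<bar>h a * T a + psum h T n xs ts - I b\<bar> < \<epsilon>"
    using HI ab eps(1) unfolding hasI_def by blast
  have "\<bar>(f a * I a + psum f I n xs ts) - ((\<lambda>x. f x * h x) a * T a + psum (\<lambda>x. f x * h x) T n xs ts)\<bar> < e"
    if P: "tagged_partition a b n xs ts" "delta_fine \<delta> n xs ts" for n xs ts
  proof -
    define x where "x i = h (ts i) * (T (xs i) - T (xs (i - 1))) - (I (xs i) - I (xs (i - 1)))" for i
    have S: "(\<Sum>i=1..n. \<bar>x i\<bar>) \<le> 2 * \<epsilon>"
      using saks_henstock_abs[OF comp dense HI Ia g Pd P] unfolding x_def .
    have "(f a * I a + psum f I n xs ts) - ((\<lambda>x. f x * h x) a * T a + psum (\<lambda>x. f x * h x) T n xs ts)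
        = - (\<Sum>i=1..n. f (ts i) * x i)"
      unfolding psum_def x_def Ia sum_negf[symmetric] sum_subtractf[symmetric]
      by (simp add: algebra_simps sum_subtractf[symmetric])
    also have "\<bar>\<dots>\<bar> \<le> (\<Sum>i=1..n. \<bar>f (ts i) * x i\<bar>)" by (simp add: sum_abs)
    also have "\<dots> \<le> (\<Sum>i=1..n. M * \<bar>x i\<bar>)"
      by (rule sum_mono) (simp add: abs_mult M(2) mult_right_mono)
    also have "\<dots> = M * (\<Sum>i=1..n. \<bar>x i\<bar>)" by (simp add: sum_distrib_left)
    also have "\<dots> \<le> M * (2 * \<epsilon>)" using S M(1) by (simp add: mult_left_mono)
    finally show ?thesis using eps(2) by linarith
  qed
  then show "\<exists>\<delta>. ngauge a b \<delta> \<and> (\<forall>n xs ts. tagged_partition a b n xs ts \<and> delta_fine \<delta> n xs ts \<longrightarrow>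
        \<bar>(f a * I a + psum f I n xs ts) - ((\<lambda>x. f x * h x) a * T a + psum (\<lambda>x. f x * h x) T n xs ts)\<bar> < e)"
    using g by blast
qed

lemma nondense_all:
  fixes a b s u :: "'a::linorder"
  assumes bnd: "\<forall>x. a \<le> x \<and> x \<le> b" and su: "s < u" and gap: "\<not> (\<exists>z. s < z \<and> z < u)"
  shows "has_RS_integral a b f G A"
  unfolding has_RS_integral_def
proof (intro allI impI)
  fix e :: real
  define \<delta> where "\<delta> t = (if t \<le> s then {a..<u} else {s<..b})" for t
  have g: "gauge_on a b \<delta>"
    unfolding gauge_on_def open_interval_in_def \<delta>_def using bnd su
    by (auto intro: le_less_trans)
  have "\<forall>n xs ts. tagged_partition a b n xs ts \<and> delta_fine \<delta> n xs ts \<longrightarrow> \<bar>RS_sum a f G n xs ts - A\<bar> < e"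
  proof (intro allI impI)
    fix n xs ts assume H: "tagged_partition a b n xs ts \<and> delta_fine \<delta> n xs ts"
    have ex: "s < xs n" using H bnd su unfolding tagged_partition_def by (metis less_le_trans)
    define i where "i = (LEAST i. s < xs i)"
    have i1: "s < xs i" using LeastI[of "\<lambda>i. s < xs i", OF ex] unfolding i_def .
    have i2: "i \<le> n" using Least_le[of "\<lambda>i. s < xs i", OF ex] unfolding i_def .
    have i0: "i \<noteq> 0" using i1 H bnd unfolding tagged_partition_def by (metis not_le)
    have i3: "xs (i - 1) \<le> s" using not_less_Least[of "i - 1" "\<lambda>i. s < xs i"] i0 unfolding i_def[symmetric]
      by (simp add: not_less)
    have i4: "u \<le> xs i" using gap i1 by (meson not_le)
    have "{xs (i - 1)..xs i} \<subseteq> \<delta> (ts i)" using H i0 i2 unfolding delta_fine_def by auto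
    then have "s \<in> \<delta> (ts i)" "u \<in> \<delta> (ts i)" using i3 i4 su by auto
    then have False unfolding \<delta>_def by (auto split: if_splits)
    then show "\<bar>RS_sum a f G n xs ts - A\<bar> < e" ..
  qed
  then show "\<exists>\<delta>. gauge_on a b \<delta> \<and> (\<forall>n xs ts. tagged_partition a b n xs ts \<and> delta_fine \<delta> n xs ts \<longrightarrow> \<bar>RS_sum a f G n xs ts - A\<bar> < e)"
    using g by blast
qed

theorem lemma6p8:
  fixes a b :: "'a::linorder_topology"
    and T h f :: "'a \<Rightarrow> real"
  assumes K_compact: "compact (UNIV :: 'a set)"
    and K_bounds: "\<forall>x. a \<le> x \<and> x \<le> b"
    and a_lt_b: "a < b"
    and T_mono: "mono T"
    and T_rcont: "\<forall>x. (T \<longlongrightarrow> T x) (at_right x)"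
    and h_int: "RS_integrable a b h T"
    and f_bdd: "bounded (range f)"
  shows "(RS_integrable a b f (\<lambda>x. RS_integral a x h T)
            \<longleftrightarrow> RS_integrable a b (\<lambda>x. f x * h x) T)
       \<and> (RS_integrable a b (\<lambda>x. f x * h x) T \<longrightarrow>
            RS_integral a b f (\<lambda>x. RS_integral a x h T)
              = RS_integral a b (\<lambda>x. f x * h x) T)"
proof (cases "\<forall>x y::'a. x < y \<longrightarrow> (\<exists>z. x < z \<and> z < y)")
  case False
  then obtain s u :: 'a where su: "s < u" "\<not> (\<exists>z. s < z \<and> z < u)" by blast
  have all: "\<And>F G A. has_RS_integral a b F G A" using nondense_all[OF K_bounds su] by blast
  have int: "\<And>F G. RS_integrable a b F G" unfolding RS_integrable_def using all by blast
  have eq: "RS_integral a b F G = (THE A::real. True)" for F G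
  proof -
    have "has_RS_integral a b F G = (\<lambda>A. True)" using all by (intro ext) simp
    then show ?thesis unfolding RS_integral_def by simp
  qed
  show ?thesis using int eq by simp
next
  case True
  note dense = True
  have ab: "a \<le> b" using a_lt_b by simp
  obtain A0 where "has_RS_integral a b h T A0" using h_int unfolding RS_integrable_def by blast
  then have H0: "hasI a b h T A0" using has_iff[OF ab] by simp
  define I where "I x = RS_integral a x h T" for x
  have HI: "\<forall>x. a \<le> x \<and> x \<le> b \<longrightarrow> hasI a x h T (I x)"
    unfolding I_def using I_has[OF K_compact dense H0] by blast
  have "hasI a a h T (I a)" using HI ab by blast
  then have Ia: "I a = h a * T a" using hasI_unique[OF K_compact dense order_refl _ hasI_point] by blast
  obtain M where M: "M > 0" "\<forall>x. \<bar>f x\<bar> \<le> M" using f_bdd unfolding bounded_pos by auto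
  note cl = closeness[OF K_compact dense HI ab Ia M]
  have cl': "\<forall>e>0. \<exists>\<delta>. ngauge a b \<delta> \<and> (\<forall>n xs ts. tagged_partition a b n xs ts \<and> delta_fine \<delta> n xs ts \<longrightarrow>
        \<bar>((\<lambda>x. f x * h x) a * T a + psum (\<lambda>x. f x * h x) T n xs ts) - (f a * I a + psum f I n xs ts)\<bar> < e)"
    using cl by (simp add: abs_minus_commute)
  have fwd: "hasI a b f I A" if "hasI a b (\<lambda>x. f x * h x) T A" for A
    by (rule transfer[OF cl' that])
  have bwd: "hasI a b (\<lambda>x. f x * h x) T A" if "hasI a b f I A" for A
    by (rule transfer[OF cl that])
  have Ieq: "(\<lambda>x. RS_integral a x h T) = I" by (rule ext) (simp add: I_def)
  show ?thesis
    unfolding Ieq RS_integrable_iff[OF ab]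
  proof (intro conjI impI)
    show "(\<exists>A. hasI a b f I A) = (\<exists>A. hasI a b (\<lambda>x. f x * h x) T A)" using fwd bwd by blast
    assume "\<exists>A. hasI a b (\<lambda>x. f x * h x) T A"
    then obtain A where A: "hasI a b (\<lambda>x. f x * h x) T A" by blast
    show "RS_integral a b f I = RS_integral a b (\<lambda>x. f x * h x) T"
      using RS_integral_eq[OF K_compact dense ab A] RS_integral_eq[OF K_compact dense ab fwd[OF A]] by simp
  qed
qed

end
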